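(* Let $a,b\geq1$ and let $\mu=(\mu_{ij})_{i,j\ge0}$ be a semi-infinite complex matrix with $\mu_{i+a,j+b}=\mu_{ij}$, and set $\widehat\mu_{ij}=\mu_{i,j+b}$. Define bilinear forms on $\mathbb C[z]$ by $\langle z^i,z^j\rangle_\mu=\mu_{ij}$ and $\langle z^i,z^j\rangle_{\widehat\mu}=\widehat\mu_{ij}$. Let $p^{(1)}_j,p^{(2)}_j$ and $\widehat p^{(1)}_j,\widehat p^{(2)}_j$ ($j\ge0$) be monic polynomials of degree $j$ with $$\langle p^{(1)}_i,p^{(2)}_j\rangle_\mu=\delta_{ij}h_i,\qquad \langle \widehat p^{(1)}_i,\widehat p^{(2)}_j\rangle_{\widehat\mu}=\delta_{ij}\widehat h_i,$$ and let $S_1,S_2,\widehat S_1,\widehat S_2$ be the semi-infinite matrices defined by $$p^{(1)}_i(z)=\sum_{k=0}^i(S_1)_{ik}z^k,\quad p^{(2)}_i(z)=h_i\sum_{k=0}^i(S_2^{-1})_{ki}z^k,$$ and analogously for $\widehat p^{(1)},\widehat p^{(2)}$ with $\widehat S_1,\widehat S_2,\widehat h$. Suppose these satisfy $$S_1\Lambda^a\widehat S_1^{-1}=S_2\widehat S_2^{-1}=:A,\qquad S_1\widehat S_1^{-1}=S_2\Lambda^{-b}\widehat S_2^{-1}=:B .$$ Then, writing $p^{(i)}$ (resp. $\widehat p^{(i)}$) for the semi-infinite column vector with $j$-th entry $p^{(i)}_j$ (resp. $\widehat p^{(i)}_j$), $h=\mathrm{diag}(h_0,h_1,\dots)$ and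 $\widehat h=\mathrm{diag}(\widehat h_0,\widehat h_1,\dots)$, $$A\widehat p^{(1)}=z^ap^{(1)},\qquad \widehat hA^Th^{-1}p^{(2)}=\widehat p^{(2)},\qquad B\widehat p^{(1)}=p^{(1)},\qquad \widehat hB^Th^{-1}p^{(2)}=z^b\widehat p^{(2)} .$$
   Context: In the semi-infinite setting, $\Lambda$ is the semi-infinite matrix $(\Lambda)_{ij}=\delta_{i+1,j}$ ($i,j\ge0$) and $\Lambda^{-1}$ denotes its transpose $(\Lambda^{-1})_{ij}=\delta_{i,j+1}$ (a right inverse only: $\Lambda^{-1}\Lambda=1-E_{11}$ with $(E_{11})_{ij}=\delta_{i0}\delta_{j0}$). $A^T,B^T$ denote transposes. All the $h_i,\widehat h_i$ are assumed nonzero. *)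

theory Defs
  imports "HOL-Analysis.Analysis" "HOL-Computational_Algebra.Polynomial"
begin

type_synonym smat = "nat \<Rightarrow> nat \<Rightarrow> complex"

text \<open>Matrix product (the sums occurring in the statement all have finite support).\<close>
definition mmult :: "smat \<Rightarrow> smat \<Rightarrow> smat" where
  "mmult X Y = (\<lambda>i j. \<Sum>\<^sub>\<infinity>k. X i k * Y k j)"

definition idm :: smat where
  "idm = (\<lambda>i j. if i = j then 1 else 0)"

definition Lam :: smat where
  "Lam = (\<lambda>i j. if j = i + 1 then 1 else 0)"

definition Laminv :: smat where
  "Laminv = (\<lambda>i j. if i = j + 1 then 1 else 0)"

primrec mpow :: "smat \<Rightarrow> nat \<Rightarrow> smat" where
  "mpow X 0 = idm"
| "mpow X (Suc n) = mmult (mpow X n) X"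

definition lower_tri :: "smat \<Rightarrow> bool" where
  "lower_tri X \<longleftrightarrow> (\<forall>i j. i < j \<longrightarrow> X i j = 0)"

definition upper_tri :: "smat \<Rightarrow> bool" where
  "upper_tri X \<longleftrightarrow> (\<forall>i j. j < i \<longrightarrow> X i j = 0)"

definition bform :: "smat \<Rightarrow> complex poly \<Rightarrow> complex poly \<Rightarrow> complex" where
  "bform \<mu> f g = (\<Sum>i\<le>degree f. \<Sum>j\<le>degree g. coeff f i * coeff g j * \<mu> i j)"

end

theory Submission
  imports Defs
begin



lemma infsum_fin:
  fixes f :: "nat \<Rightarrow> complex"
  assumes "finite F" "\<And>k. k \<notin> F \<Longrightarrow> f k = 0"
  shows "(\<Sum>\<^sub>\<infinity>k. f k) = sum f F"
proof -
  have "(\<Sum>\<^sub>\<infinity>k. f k) = infsum f F"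
    by (rule infsum_cong_neutral) (use assms in auto)
  then show ?thesis using assms by simp
qed

lemma assoc1:
  fixes X Z :: "nat \<Rightarrow> complex" and Y :: smat
  assumes "\<And>m. m > N \<Longrightarrow> X m = 0" "\<And>m j. m \<le> N \<Longrightarrow> j > M \<Longrightarrow> Y m j = 0"
  shows "(\<Sum>\<^sub>\<infinity>j. (\<Sum>\<^sub>\<infinity>m. X m * Y m j) * Z j) = (\<Sum>\<^sub>\<infinity>m. X m * (\<Sum>\<^sub>\<infinity>j. Y m j * Z j))"
proof -
  have i1: "(\<Sum>\<^sub>\<infinity>m. X m * Y m j) = (\<Sum>m\<le>N. X m * Y m j)" for j
    by (rule infsum_fin) (use assms in auto)
  have i2: "(\<Sum>\<^sub>\<infinity>j. Y m j * Z j) = (\<Sum>j\<le>M. Y m j * Z j)" if "m \<le> N" for m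
    by (rule infsum_fin) (use assms that in auto)
  have "(\<Sum>\<^sub>\<infinity>j. (\<Sum>\<^sub>\<infinity>m. X m * Y m j) * Z j) = (\<Sum>j\<le>M. (\<Sum>m\<le>N. X m * Y m j) * Z j)"
    unfolding i1 by (rule infsum_fin) (use assms in auto)
  also have "\<dots> = (\<Sum>m\<le>N. X m * (\<Sum>j\<le>M. Y m j * Z j))"
    by (simp add: sum_distrib_left sum_distrib_right mult.assoc sum.swap[of _ "{..M}"])
  also have "\<dots> = (\<Sum>m\<le>N. X m * (\<Sum>\<^sub>\<infinity>j. Y m j * Z j))"
    using i2 by simp
  also have "\<dots> = (\<Sum>\<^sub>\<infinity>m. X m * (\<Sum>\<^sub>\<infinity>j. Y m j * Z j))"
    by (rule infsum_fin[symmetric]) (use assms in auto)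
  finally show ?thesis .
qed

lemma assoc2:
  fixes X Z :: "nat \<Rightarrow> complex" and Y :: smat
  assumes "\<And>m. m > N \<Longrightarrow> Z m = 0" "\<And>j m. m \<le> N \<Longrightarrow> j > M \<Longrightarrow> Y j m = 0"
  shows "(\<Sum>\<^sub>\<infinity>j. X j * (\<Sum>\<^sub>\<infinity>m. Y j m * Z m)) = (\<Sum>\<^sub>\<infinity>m. (\<Sum>\<^sub>\<infinity>j. X j * Y j m) * Z m)"
proof -
  have "(\<Sum>\<^sub>\<infinity>j. X j * (\<Sum>\<^sub>\<infinity>m. Y j m * Z m)) = (\<Sum>\<^sub>\<infinity>j. (\<Sum>\<^sub>\<infinity>m. Z m * Y j m) * X j)"
    by (simp add: mult.commute)
  also have "\<dots> = (\<Sum>\<^sub>\<infinity>m. Z m * (\<Sum>\<^sub>\<infinity>j. Y j m * X j))"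
    by (rule assoc1[of N Z M "\<lambda>m j. Y j m"]) (use assms in auto)
  also have "\<dots> = (\<Sum>\<^sub>\<infinity>m. (\<Sum>\<^sub>\<infinity>j. X j * Y j m) * Z m)"
    by (simp add: mult.commute)
  finally show ?thesis .
qed

lemma mpow_Lam: "mpow Lam n = (\<lambda>i j. if j = i + n then 1 else 0)"
proof (induction n)
  case 0 then show ?case by (auto simp: idm_def fun_eq_iff)
next
  case (Suc n)
  show ?case
  proof (rule ext, rule ext)
    fix i j
    have "mpow Lam (Suc n) i j = (\<Sum>\<^sub>\<infinity>k. (if k = i + n then 1 else 0) * Lam k j)"
      by (simp add: Suc mmult_def)
    also have "\<dots> = (\<Sum>k\<in>{i+n}. (if k = i + n then 1 else 0) * Lam k j)"
      by (rule infsum_fin) auto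
    finally show "mpow Lam (Suc n) i j = (if j = i + Suc n then 1 else 0)"
      by (simp add: Lam_def)
  qed
qed

lemma mpow_Laminv: "mpow Laminv n = (\<lambda>i j. if i = j + n then 1 else 0)"
proof (induction n)
  case 0 then show ?case by (simp add: idm_def)
next
  case (Suc n)
  show ?case
  proof (rule ext, rule ext)
    fix i j
    have "mpow Laminv (Suc n) i j = (\<Sum>\<^sub>\<infinity>k. (if i = k + n then 1 else 0) * Laminv k j)"
      by (simp add: Suc mmult_def)
    also have "\<dots> = (\<Sum>k\<in>{j+1}. (if i = k + n then 1 else 0) * Laminv k j)"
      by (rule infsum_fin) (auto simp: Laminv_def)
    finally show "mpow Laminv (Suc n) i j = (if i = j + Suc n then 1 else 0)"
      by (simp add: Laminv_def)
  qed
qed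

theorem proposition2p3:
  fixes a b :: nat
    and \<mu> \<mu>h :: smat
    and p1 p2 p1h p2h :: "nat \<Rightarrow> complex poly"
    and h hh :: "nat \<Rightarrow> complex"
    and S1 S2inv S1h S2hinv S2 S1hinv A B :: smat
  assumes ab: "a \<ge> 1" "b \<ge> 1"
    and per: "\<And>i j. \<mu> (i + a) (j + b) = \<mu> i j"
    and muh: "\<And>i j. \<mu>h i j = \<mu> i (j + b)"
    and monic: "\<And>j. degree (p1 j) = j \<and> lead_coeff (p1 j) = 1"
               "\<And>j. degree (p2 j) = j \<and> lead_coeff (p2 j) = 1"
               "\<And>j. degree (p1h j) = j \<and> lead_coeff (p1h j) = 1"
               "\<And>j. degree (p2h j) = j \<and> lead_coeff (p2h j) = 1"
    and hnz: "\<And>i. h i \<noteq> 0" "\<And>i. hh i \<noteq> 0"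
    and orth: "\<And>i j. bform \<mu> (p1 i) (p2 j) = (if i = j then h i else 0)"
    and orthh: "\<And>i j. bform \<mu>h (p1h i) (p2h j) = (if i = j then hh i else 0)"
    and S1_def: "\<And>i k. S1 i k = coeff (p1 i) k"
    and S2inv_def: "\<And>k i. h i * S2inv k i = coeff (p2 i) k"
    and S1h_def: "\<And>i k. S1h i k = coeff (p1h i) k"
    and S2hinv_def: "\<And>k i. hh i * S2hinv k i = coeff (p2h i) k"
    and S2_inv: "upper_tri S2" "mmult S2 S2inv = idm" "mmult S2inv S2 = idm"
    and S1h_inv: "lower_tri S1hinv" "mmult S1h S1hinv = idm" "mmult S1hinv S1h = idm"
    and A1: "A = mmult (mmult S1 (mpow Lam a)) S1hinv"
    and A2: "A = mmult S2 S2hinv"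
    and B1: "B = mmult S1 S1hinv"
    and B2: "B = mmult (mmult S2 (mpow Laminv b)) S2hinv"
  shows "(\<forall>i k. (\<Sum>\<^sub>\<infinity>j. A i j * coeff (p1h j) k) = coeff (monom 1 a * p1 i) k)
    \<and> (\<forall>i k. hh i * (\<Sum>\<^sub>\<infinity>j. A j i * inverse (h j) * coeff (p2 j) k) = coeff (p2h i) k)
    \<and> (\<forall>i k. (\<Sum>\<^sub>\<infinity>j. B i j * coeff (p1h j) k) = coeff (p1 i) k)
    \<and> (\<forall>i k. hh i * (\<Sum>\<^sub>\<infinity>j. B j i * inverse (h j) * coeff (p2 j) k) = coeff (monom 1 b * p2h i) k)"
  proof -
  have deg0: "coeff p k = 0" if "degree p = i" "k > i" for p :: "complex poly" and i k
    using that by (simp add: coeff_eq_0)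
  have S1z: "S1 i k = 0" if "k > i" for i k
    using S1_def deg0 monic(1) that by metis
  have S1hz: "S1hinv m j = 0" if "m < j" for m j
    using S1h_inv(1) that unfolding lower_tri_def by blast
  have S2z: "S2 j m = 0" if "m < j" for m j
    using S2_inv(1) that unfolding upper_tri_def by blast
  have S2hz: "S2hinv m i = 0" if "m > i" for m i
  proof -
    have "hh i * S2hinv m i = 0" using S2hinv_def deg0 monic(4) that by metis
    then show ?thesis using hnz(2) by simp
  qed
  have S2i: "inverse (h j) * coeff (p2 j) k = S2inv k j" for j k
  proof -
    have "h j * S2inv k j = coeff (p2 j) k" by (rule S2inv_def)
    then show ?thesis using hnz(1)[of j] by (auto simp: field_simps)
  qed
  have inv1: "(\<Sum>\<^sub>\<infinity>j. S1hinv m j * S1h j k) = idm m k" for m k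
    using fun_cong[OF fun_cong[OF S1h_inv(3)]] by (simp add: mmult_def)
  have inv2: "(\<Sum>\<^sub>\<infinity>j. S2inv k j * S2 j m) = idm k m" for m k
    using fun_cong[OF fun_cong[OF S2_inv(3)]] by (simp add: mmult_def)
  have c1: "(\<Sum>\<^sub>\<infinity>j. A i j * coeff (p1h j) k) = coeff (monom 1 a * p1 i) k" for i k
  proof -
    define X where "X = mmult S1 (mpow Lam a)"
    have Xe: "X i m = (if a \<le> m then S1 i (m - a) else 0)" for m
    proof -
      have "X i m = (\<Sum>\<^sub>\<infinity>l. S1 i l * (if m = l + a then 1 else 0))"
        by (simp add: X_def mmult_def mpow_Lam)
      also have "\<dots> = (\<Sum>l\<in>{m-a}. S1 i l * (if m = l + a then 1 else 0))"
        by (rule infsum_fin) auto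
      finally show ?thesis by auto
    qed
    have AX: "A = mmult X S1hinv" using A1 X_def by simp
    have "(\<Sum>\<^sub>\<infinity>j. A i j * coeff (p1h j) k) = (\<Sum>\<^sub>\<infinity>j. (\<Sum>\<^sub>\<infinity>m. X i m * S1hinv m j) * S1h j k)"
      by (simp add: AX mmult_def S1h_def)
    also have "\<dots> = (\<Sum>\<^sub>\<infinity>m. X i m * (\<Sum>\<^sub>\<infinity>j. S1hinv m j * S1h j k))"
      by (rule assoc1[where N="i+a" and M="i+a"]) (auto simp: Xe S1z S1hz)
    also have "\<dots> = (\<Sum>\<^sub>\<infinity>m. X i m * idm m k)" by (simp add: inv1)
    also have "\<dots> = (\<Sum>m\<in>{k}. X i m * idm m k)" by (rule infsum_fin) (auto simp: idm_def)
    finally show ?thesis by (simp add: Xe S1_def coeff_monom_mult idm_def)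
  qed
  have c3: "(\<Sum>\<^sub>\<infinity>j. B i j * coeff (p1h j) k) = coeff (p1 i) k" for i k
  proof -
    have "(\<Sum>\<^sub>\<infinity>j. B i j * coeff (p1h j) k) = (\<Sum>\<^sub>\<infinity>j. (\<Sum>\<^sub>\<infinity>m. S1 i m * S1hinv m j) * S1h j k)"
      by (simp add: B1 mmult_def S1h_def)
    also have "\<dots> = (\<Sum>\<^sub>\<infinity>m. S1 i m * (\<Sum>\<^sub>\<infinity>j. S1hinv m j * S1h j k))"
      by (rule assoc1[where N="i" and M="i"]) (auto simp: S1z S1hz)
    also have "\<dots> = (\<Sum>\<^sub>\<infinity>m. S1 i m * idm m k)" by (simp add: inv1)
    also have "\<dots> = (\<Sum>m\<in>{k}. S1 i m * idm m k)" by (rule infsum_fin) (auto simp: idm_def)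
    finally show ?thesis by (simp add: S1_def idm_def)
  qed
  have c2: "hh i * (\<Sum>\<^sub>\<infinity>j. A j i * inverse (h j) * coeff (p2 j) k) = coeff (p2h i) k" for i k
  proof -
    have "(\<Sum>\<^sub>\<infinity>j. A j i * inverse (h j) * coeff (p2 j) k) = (\<Sum>\<^sub>\<infinity>j. S2inv k j * (\<Sum>\<^sub>\<infinity>m. S2 j m * S2hinv m i))"
      by (simp add: A2 mmult_def S2i[symmetric] mult_ac)
    also have "\<dots> = (\<Sum>\<^sub>\<infinity>m. (\<Sum>\<^sub>\<infinity>j. S2inv k j * S2 j m) * S2hinv m i)"
      by (rule assoc2[where N="i" and M="i"]) (auto simp: S2z S2hz)
    also have "\<dots> = (\<Sum>\<^sub>\<infinity>m. idm k m * S2hinv m i)" by (simp add: inv2)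
    also have "\<dots> = (\<Sum>m\<in>{k}. idm k m * S2hinv m i)" by (rule infsum_fin) (auto simp: idm_def)
    finally show ?thesis by (simp add: S2hinv_def idm_def)
  qed
  have c4: "hh i * (\<Sum>\<^sub>\<infinity>j. B j i * inverse (h j) * coeff (p2 j) k) = coeff (monom 1 b * p2h i) k" for i k
  proof -
    define W where "W = mmult S2 (mpow Laminv b)"
    have We: "W j m = S2 j (m + b)" for j m
    proof -
      have "W j m = (\<Sum>\<^sub>\<infinity>l. S2 j l * (if l = m + b then 1 else 0))"
        by (simp add: W_def mmult_def mpow_Laminv)
      also have "\<dots> = (\<Sum>l\<in>{m+b}. S2 j l * (if l = m + b then 1 else 0))"
        by (rule infsum_fin) auto
      finally show ?thesis by auto
    qed
    have BW: "B = mmult W S2hinv" using B2 W_def by simp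
    have "(\<Sum>\<^sub>\<infinity>j. B j i * inverse (h j) * coeff (p2 j) k) = (\<Sum>\<^sub>\<infinity>j. S2inv k j * (\<Sum>\<^sub>\<infinity>m. W j m * S2hinv m i))"
      by (simp add: BW mmult_def S2i[symmetric] mult_ac)
    also have "\<dots> = (\<Sum>\<^sub>\<infinity>m. (\<Sum>\<^sub>\<infinity>j. S2inv k j * W j m) * S2hinv m i)"
      by (rule assoc2[where N="i" and M="i+b"]) (auto simp: We S2z S2hz)
    also have "\<dots> = (\<Sum>\<^sub>\<infinity>m. idm k (m + b) * S2hinv m i)" by (simp add: inv2 We)
    also have "\<dots> = (\<Sum>m\<in>{k-b}. idm k (m + b) * S2hinv m i)" by (rule infsum_fin) (auto simp: idm_def)
    finally show ?thesis by (simp add: S2hinv_def idm_def coeff_monom_mult)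
  qed
  show ?thesis using c1 c2 c3 c4 by blast
qed

end
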